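(* Let $\gamma\in\mathbf{Sp}(2n,\mathbb R)$ with $\gamma\tau(\gamma)=I$. Then there exists $h\in\mathbf{Sp}(2n,\mathbb R)$ with $\gamma=\tau(h)h^{-1}$ if and only if $\mathfrak h_n^\gamma\neq\emptyset$.
   Context: $\mathbf{Sp}(2n,\mathbb R)$: real matrices $g=\begin{pmatrix}A&B\\C&D\end{pmatrix}$ with ${}^tgJg=J$, $J=\begin{pmatrix}0&I\\-I&0\end{pmatrix}$, acting on $\mathfrak h_n=\{Z\in M_n(\mathbb C):{}^tZ=Z,\mathrm{Im}Z>0\}$ by $gZ=(AZ+B)(CZ+D)^{-1}$. $\tau\begin{pmatrix}A&B\\C&D\end{pmatrix}=\begin{pmatrix}A&-B\\-C&D\end{pmatrix}$ and $\tau(Z)=-\overline Z$; $\mathfrak h_n^\gamma=\{Z\in\mathfrak h_n:\gamma Z=\tau(Z)\}$. *)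

theory Defs
  imports "HOL-Analysis.Analysis"
begin

text \<open>Real 2n x 2n matrices are indexed by the type 'n + 'n: Inl i is the i-th index of the
first block, Inr i the i-th index of the second block (n = CARD('n)).\<close>

type_synonym 'n rmat2 = "real ^ ('n + 'n) ^ ('n + 'n)"

definition blkA :: "'n::finite rmat2 \<Rightarrow> real^'n^'n" where
  "blkA g = (\<chi> i j. g $ Inl i $ Inl j)"
definition blkB :: "'n::finite rmat2 \<Rightarrow> real^'n^'n" where
  "blkB g = (\<chi> i j. g $ Inl i $ Inr j)"
definition blkC :: "'n::finite rmat2 \<Rightarrow> real^'n^'n" where
  "blkC g = (\<chi> i j. g $ Inr i $ Inl j)"
definition blkD :: "'n::finite rmat2 \<Rightarrow> real^'n^'n" where
  "blkD g = (\<chi> i j. g $ Inr i $ Inr j)"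

definition Jmat :: "'n::finite rmat2" where
  "Jmat = (\<chi> i j. case (i, j) of
       (Inl a, Inr b) \<Rightarrow> (if a = b then 1 else 0)
     | (Inr a, Inl b) \<Rightarrow> (if a = b then -1 else 0)
     | _ \<Rightarrow> 0)"

definition Sp :: "'n::finite rmat2 set" where
  "Sp = {g. transpose g ** Jmat ** g = Jmat}"

definition tauM :: "'n::finite rmat2 \<Rightarrow> 'n rmat2" where
  "tauM g = (\<chi> i j. case (i, j) of
       (Inl a, Inl b) \<Rightarrow> g $ i $ j
     | (Inr a, Inr b) \<Rightarrow> g $ i $ j
     | _ \<Rightarrow> - (g $ i $ j))"

definition cmat :: "real^'n^'m \<Rightarrow> complex^'n^'m" where
  "cmat M = (\<chi> i j. complex_of_real (M $ i $ j))"

definition ImM :: "complex^'n^'m \<Rightarrow> real^'n^'m" where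
  "ImM Z = (\<chi> i j. Im (Z $ i $ j))"

definition pos_def :: "real^'n^'n \<Rightarrow> bool" where
  "pos_def M \<longleftrightarrow> (\<forall>x. x \<noteq> 0 \<longrightarrow> x \<bullet> (M *v x) > 0)"

definition siegel :: "(complex^'n^'n) set" where
  "siegel = {Z. transpose Z = Z \<and> pos_def (ImM Z)}"

definition act :: "'n::finite rmat2 \<Rightarrow> complex^'n^'n \<Rightarrow> complex^'n^'n" where
  "act g Z = (cmat (blkA g) ** Z + cmat (blkB g)) ** matrix_inv (cmat (blkC g) ** Z + cmat (blkD g))"

definition tauZ :: "complex^'n^'n \<Rightarrow> complex^'n^'n" where
  "tauZ Z = (\<chi> i j. - cnj (Z $ i $ j))"

definition siegel_fix :: "'n::finite rmat2 \<Rightarrow> (complex^'n^'n) set" where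
  "siegel_fix \<gamma> = {Z \<in> siegel. act \<gamma> Z = tauZ Z}"

end

theory Submission
  imports Defs "HOL-Library.Cardinality"
begin

lemma minv_props:
  fixes A :: "'a::semiring_1^'n^'m"
  assumes "invertible A"
  shows "A ** matrix_inv A = mat 1" "matrix_inv A ** A = mat 1"
proof -
  from assms obtain A' where "A ** A' = mat 1 \<and> A' ** A = mat 1" unfolding invertible_def by blast
  hence "A ** matrix_inv A = mat 1 \<and> matrix_inv A ** A = mat 1"
    unfolding matrix_inv_def by (rule someI)
  thus "A ** matrix_inv A = mat 1" "matrix_inv A ** A = mat 1" by auto
qed

lemma mm_add_r: "(A + B) ** C = A ** C + B ** (C::'a::semiring_1^_^_)"
  by (vector matrix_matrix_mult_def sum.distrib distrib_right)
lemma mm_neg_l: "(- A) ** B = - (A ** (B::'a::ring_1^_^_))"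
  by (vector matrix_matrix_mult_def sum_negf)
lemma mm_neg_r: "A ** (- B) = - (A ** (B::'a::ring_1^_^_))"
  by (vector matrix_matrix_mult_def sum_negf)
lemma mm_diff_l: "(A - B) ** C = A ** C - B ** (C::'a::ring_1^_^_)"
  by (vector matrix_matrix_mult_def sum_subtractf left_diff_distrib)
lemma mm_diff_r: "C ** (A - B) = C ** A - C ** (B::'a::ring_1^_^_)"
  by (vector matrix_matrix_mult_def sum_subtractf right_diff_distrib)
lemma mm_zero_l[simp]: "(0::'a::semiring_1^_^_) ** A = 0"
  by (vector matrix_matrix_mult_def)
lemma mm_zero_r[simp]: "A ** (0::'a::semiring_1^_^_) = 0"
  by (vector matrix_matrix_mult_def)
lemma tr_add: "transpose (A + B) = transpose A + transpose B"
  by (vector transpose_def)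
lemma tr_neg: "transpose (- A) = - transpose A"
  by (vector transpose_def)
lemma tr_diff: "transpose (A - B) = transpose A - transpose (B::'a::ab_group_add^_^_)"
  by (vector transpose_def)
lemma tr_zero[simp]: "transpose 0 = 0"
  by (vector transpose_def)
lemma mat_neg: "mat (- c) = - mat (c::'a::ab_group_add)"
  by (vector mat_def)

lemma sum_UNIV_plus:
  "(\<Sum>r\<in>(UNIV::('a::finite + 'b::finite) set). f r) = (\<Sum>a\<in>UNIV. f (Inl a)) + (\<Sum>b\<in>UNIV. f (Inr b))"
proof -
  have "(\<Sum>r\<in>(UNIV::('a + 'b) set). f r) = (\<Sum>r\<in>(UNIV <+> UNIV). f r)" by simp
  also have "\<dots> = (\<Sum>a\<in>UNIV. f (Inl a)) + (\<Sum>b\<in>UNIV. f (Inr b))"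
    by (subst sum.Plus) (auto simp: comp_def)
  finally show ?thesis .
qed

definition bmk :: "'a^'n^'n \<Rightarrow> 'a^'n^'n \<Rightarrow> 'a^'n^'n \<Rightarrow> 'a^'n^'n \<Rightarrow> 'a^('n+'n)^('n+'n)" where
  "bmk P Q R T = (\<chi> r s. case r of Inl i \<Rightarrow> (case s of Inl j \<Rightarrow> P$i$j | Inr j \<Rightarrow> Q$i$j)
                                 | Inr i \<Rightarrow> (case s of Inl j \<Rightarrow> R$i$j | Inr j \<Rightarrow> T$i$j))"
definition b11 :: "'a^('n+'n)^('n+'n) \<Rightarrow> 'a^'n^'n" where "b11 M = (\<chi> i j. M$Inl i$Inl j)"
definition b12 :: "'a^('n+'n)^('n+'n) \<Rightarrow> 'a^'n^'n" where "b12 M = (\<chi> i j. M$Inl i$Inr j)"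
definition b21 :: "'a^('n+'n)^('n+'n) \<Rightarrow> 'a^'n^'n" where "b21 M = (\<chi> i j. M$Inr i$Inl j)"
definition b22 :: "'a^('n+'n)^('n+'n) \<Rightarrow> 'a^'n^'n" where "b22 M = (\<chi> i j. M$Inr i$Inr j)"

lemma bmk_nth[simp]:
  "bmk P Q R T $ Inl i $ Inl j = P$i$j" "bmk P Q R T $ Inl i $ Inr j = Q$i$j"
  "bmk P Q R T $ Inr i $ Inl j = R$i$j" "bmk P Q R T $ Inr i $ Inr j = T$i$j"
  by (simp_all add: bmk_def)

lemma blocks_bmk[simp]: "b11 (bmk P Q R T) = P" "b12 (bmk P Q R T) = Q" "b21 (bmk P Q R T) = R" "b22 (bmk P Q R T) = T"
  by (simp_all add: b11_def b12_def b21_def b22_def vec_eq_iff)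

lemma bmk_eta: "bmk (b11 M) (b12 M) (b21 M) (b22 M) = M"
  by (simp add: vec_eq_iff bmk_def b11_def b12_def b21_def b22_def split: sum.split)

lemma bmk_eq_iff: "bmk P Q R T = bmk P' Q' R' T' \<longleftrightarrow> P = P' \<and> Q = Q' \<and> R = R' \<and> T = T'"
  by (metis blocks_bmk)

lemma bmk_mult:
  fixes A :: "'a::semiring_1^'n::finite^'n"
  shows "bmk A B C D ** bmk A' B' C' D' = bmk (A**A' + B**C') (A**B' + B**D') (C**A' + D**C') (C**B' + D**D')"
  by (simp add: vec_eq_iff matrix_matrix_mult_def sum_UNIV_plus bmk_def split: sum.split)

lemma bmk_transpose: "transpose (bmk A B C D) = bmk (transpose A) (transpose C) (transpose B) (transpose D)"
  by (simp add: vec_eq_iff transpose_def bmk_def split: sum.split)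

lemma bmk_add: "bmk A B C D + bmk A' B' C' D' = bmk (A+A') (B+B') (C+C') (D+D')"
  by (simp add: vec_eq_iff bmk_def split: sum.split)
lemma bmk_neg: "- bmk A B C D = bmk (-A) (-B) (-C) (-D)"
  by (simp add: vec_eq_iff bmk_def split: sum.split)
lemma bmk_mat: "mat c = bmk (mat c) 0 0 (mat c)"
  by (simp add: vec_eq_iff bmk_def mat_def split: sum.split)
lemma bmk_zero: "0 = bmk 0 0 0 0"
  by (simp add: vec_eq_iff bmk_def split: sum.split)

lemma Jmat_bmk: "Jmat = bmk 0 (mat 1) (- mat 1) 0"
  by (simp add: vec_eq_iff bmk_def Jmat_def mat_def split: sum.split)

lemma tauM_bmk: "tauM g = bmk (b11 g) (- b12 g) (- b21 g) (b22 g)"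
  by (simp add: vec_eq_iff bmk_def tauM_def b11_def b12_def b21_def b22_def split: sum.split)

lemma blk_eq: "blkA g = b11 g" "blkB g = b12 g" "blkC g = b21 g" "blkD g = b22 g"
  by (simp_all add: blkA_def blkB_def blkC_def blkD_def b11_def b12_def b21_def b22_def)

definition stk :: "'a^'m^'n \<Rightarrow> 'a^'m^'n \<Rightarrow> 'a^'m^('n+'n)" where
  "stk T U = (\<chi> r j. case r of Inl i \<Rightarrow> T$i$j | Inr i \<Rightarrow> U$i$j)"
definition topb :: "'a^'m^('n+'n) \<Rightarrow> 'a^'m^'n" where "topb X = (\<chi> i j. X$Inl i$j)"
definition botb :: "'a^'m^('n+'n) \<Rightarrow> 'a^'m^'n" where "botb X = (\<chi> i j. X$Inr i$j)"

lemma stk_parts[simp]: "topb (stk T U) = T" "botb (stk T U) = U"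
  by (simp_all add: topb_def botb_def stk_def vec_eq_iff)
lemma stk_eta: "stk (topb X) (botb X) = X"
  by (simp add: vec_eq_iff stk_def topb_def botb_def split: sum.split)
lemma stk_eq_iff: "stk T U = stk T' U' \<longleftrightarrow> T = T' \<and> U = U'"
  by (metis stk_parts)

lemma bmk_stk:
  fixes A :: "'a::semiring_1^'n::finite^'n"
  shows "bmk A B C D ** stk T U = stk (A**T + B**U) (C**T + D**U)"
  by (simp add: vec_eq_iff matrix_matrix_mult_def sum_UNIV_plus bmk_def stk_def split: sum.split)

lemma stk_mult: "stk T U ** X = stk (T ** X) (U ** X)"
  by (simp add: vec_eq_iff matrix_matrix_mult_def stk_def split: sum.split)

lemma tr_stk:
  fixes T :: "'a::comm_semiring_1^'m^'n::finite"
  shows "transpose (stk T U) ** stk T' U' = transpose T ** T' + transpose U ** U'"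
  by (simp add: vec_eq_iff matrix_matrix_mult_def sum_UNIV_plus stk_def transpose_def)

lemma stk_neg: "- stk T U = stk (-T) (-U)"
  by (simp add: vec_eq_iff stk_def split: sum.split)


lemma dot_mv: "(A *v x) \<bullet> y = x \<bullet> (transpose A *v (y::real^_))"
  by (metis dot_lmul_matrix transpose_matrix_vector transpose_transpose)

lemma mv_neg_l: "(- A) *v x = - (A *v (x::'a::ring_1^_))"
  by (vector matrix_vector_mult_def sum_negf)
lemma mv_neg_r: "A *v (- x) = - (A *v (x::'a::ring_1^_))"
  by (vector matrix_vector_mult_def sum_negf)

lemma J_inj: "inj ((*v) (Jmat :: 'n::finite rmat2))"
proof -
  have JJ: "Jmat ** (Jmat :: 'n rmat2) = - mat 1"
    by (simp add: Jmat_bmk bmk_mult bmk_neg mm_neg_l mm_neg_r bmk_mat[of 1])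
  have mvn: "(- mat 1) *v x = - x" for x :: "real^('n+'n)"
    by (simp add: mv_neg_l)
  show ?thesis
  proof (rule injI)
    fix x y :: "real^('n+'n)" assume "Jmat *v x = Jmat *v y"
    hence "Jmat *v (Jmat *v x) = Jmat *v (Jmat *v y)" by simp
    thus "x = y" by (simp add: matrix_vector_mul_assoc JJ mvn)
  qed
qed

lemma iso_dim:
  fixes L :: "(real^('n::finite+'n)) set"
  assumes L: "subspace L" and iso: "\<And>x y. x \<in> L \<Longrightarrow> y \<in> L \<Longrightarrow> x \<bullet> (Jmat *v y) = 0"
  shows "dim L \<le> CARD('n)"
proof -
  let ?L' = "(\<lambda>y. Jmat *v y) ` L"
  have "dim ?L' = dim L"
    by (rule dim_image_eq) (auto intro: inj_on_subset[OF J_inj])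
  moreover have "dim (L \<union> ?L') = dim L + dim ?L'"
    by (rule dim_orthogonal_sum) (auto simp: iso)
  moreover have "dim (L \<union> ?L') \<le> CARD('n + 'n)"
    by (rule dim_subset_UNIV_cart)
  ultimately show ?thesis by (simp add: card_sum)
qed

lemma asi_dim:
  fixes s :: "'n::finite rmat2"
  assumes ss: "s ** s = mat 1" and sJs: "transpose s ** Jmat ** s = - Jmat"
  shows "dim {x. s *v x = x} = CARD('n)"
proof -
  let ?L1 = "{x. s *v x = x}" and ?L2 = "{x. s *v x = - x}"
  have key: "(s *v x) \<bullet> (Jmat *v (s *v y)) = - (x \<bullet> (Jmat *v y))" for x y
  proof -
    have "(s *v x) \<bullet> (Jmat *v (s *v y)) = x \<bullet> ((transpose s ** Jmat ** s) *v y)"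
      by (simp add: dot_mv matrix_vector_mul_assoc matrix_mul_assoc)
    also have "\<dots> = - (x \<bullet> (Jmat *v y))" using sJs by (simp add: vec_eq_iff matrix_vector_mult_def inner_vec_def sum_negf)
    finally show ?thesis .
  qed
  have s1: "subspace ?L1" unfolding subspace_def by (auto simp: matrix_vector_right_distrib matrix_vector_mult_scaleR)
  have s2: "subspace ?L2" unfolding subspace_def by (auto simp: matrix_vector_right_distrib matrix_vector_mult_scaleR)
  have d1: "dim ?L1 \<le> CARD('n)"
  proof (rule iso_dim[OF s1])
    fix x y assume "x \<in> ?L1" "y \<in> ?L1"
    thus "x \<bullet> (Jmat *v y) = 0" using key[of x y] by simp
  qed
  have d2: "dim ?L2 \<le> CARD('n)"
  proof (rule iso_dim[OF s2])
    fix x y assume "x \<in> ?L2" "y \<in> ?L2"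
    thus "x \<bullet> (Jmat *v y) = 0" using key[of x y] by (simp add: mv_neg_r)
  qed
  have "{x + y |x y. x \<in> ?L1 \<and> y \<in> ?L2} = UNIV"
  proof -
    { fix z :: "real^('n+'n)"
      have sz: "s *v (s *v z) = z" by (simp add: matrix_vector_mul_assoc ss)
      have "z = (1/2) *\<^sub>R (z + s *v z) + (1/2) *\<^sub>R (z - s *v z)"
        by (simp add: vec_eq_iff field_simps)
      moreover have "s *v ((1/2) *\<^sub>R (z + s *v z)) = (1/2) *\<^sub>R (z + s *v z)"
        by (simp add: matrix_vector_mult_scaleR matrix_vector_right_distrib sz add.commute)
      moreover have "s *v ((1/2) *\<^sub>R (z - s *v z)) = - ((1/2) *\<^sub>R (z - s *v z))"
        by (simp add: matrix_vector_mult_scaleR matrix_vector_mult_diff_distrib sz algebra_simps)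
      ultimately have "z \<in> {x + y |x y. x \<in> ?L1 \<and> y \<in> ?L2}"
        by (intro CollectI exI[of _ "(1/2) *\<^sub>R (z + s *v z)"] exI[of _ "(1/2) *\<^sub>R (z - s *v z)"]) simp }
    thus ?thesis by auto
  qed
  moreover have "?L1 \<inter> ?L2 = {0}"
  proof -
    { fix x :: "real^('n+'n)" assume "s *v x = x" "s *v x = - x"
      hence "x = - x" by simp
      hence "x = 0" by (simp add: vec_eq_iff) }
    thus ?thesis by auto
  qed
  ultimately have "dim (UNIV :: (real^('n+'n)) set) + dim ({0}::(real^('n+'n)) set) = dim ?L1 + dim ?L2"
    using dim_sums_Int[OF s1 s2] by simp
  hence "2 * CARD('n) = dim ?L1 + dim ?L2" by (simp add: card_sum)
  with d1 d2 show ?thesis by linarith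
qed


definition Smat :: "'n::finite rmat2" where "Smat = bmk (mat 1) 0 0 (- mat 1)"

lemma SS: "Smat ** Smat = (mat 1 :: 'n::finite rmat2)"
  by (simp add: Smat_def bmk_mult mm_neg_l mm_neg_r bmk_mat[of 1])
lemma trS: "transpose Smat = (Smat :: 'n::finite rmat2)"
  by (simp add: Smat_def bmk_transpose tr_neg)
lemma SJS: "transpose Smat ** Jmat ** Smat = - (Jmat :: 'n::finite rmat2)"
  by (simp add: Smat_def Jmat_bmk bmk_transpose tr_neg bmk_mult mm_neg_l mm_neg_r bmk_neg)
lemma tau_S: "tauM g = Smat ** g ** (Smat :: 'n::finite rmat2)"
proof -
  have "Smat ** bmk A B C D ** Smat = bmk A (-B) (-C) D" for A B C D :: "real^'n^'n"
    by (simp add: Smat_def bmk_mult mm_neg_l mm_neg_r)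
  from this[of "b11 g" "b12 g" "b21 g" "b22 g"] show ?thesis by (simp add: bmk_eta tauM_bmk)
qed
lemma smv: "(c *\<^sub>R A) *v x = c *\<^sub>R (A *v (x::real^_))"
  by (simp add: vec_eq_iff matrix_vector_mult_def sum_distrib_left mult.assoc)

lemma JJ: "Jmat ** Jmat = - (mat 1 :: 'n::finite rmat2)"
  by (simp add: Jmat_bmk bmk_mult bmk_neg mm_neg_l mm_neg_r bmk_mat[of 1])
lemma trJ: "transpose Jmat = - (Jmat :: 'n::finite rmat2)"
  by (simp add: Jmat_bmk bmk_transpose tr_neg bmk_neg)
lemma J_invertible: "invertible (Jmat :: 'n::finite rmat2)"
  unfolding invertible_def
  by (rule exI[of _ "- Jmat"]) (simp add: mm_neg_r mm_neg_l JJ)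

lemma Sp_invertible:
  fixes h :: "'n::finite rmat2"
  assumes "h \<in> Sp" shows "invertible h"
proof -
  have "transpose h ** Jmat ** h = Jmat" using assms by (simp add: Sp_def)
  hence "(- Jmat ** transpose h ** Jmat) ** h = - Jmat ** Jmat"
    by (metis matrix_mul_assoc)
  also have "\<dots> = mat 1" by (simp add: mm_neg_l JJ)
  finally show ?thesis using invertible_left_inverse by blast
qed

lemma exists_h:
  fixes \<gamma> :: "'n::finite rmat2"
  assumes gSp: "\<gamma> \<in> Sp" and gt: "\<gamma> ** tauM \<gamma> = mat 1"
  shows "\<exists>h\<in>Sp. \<gamma> = tauM h ** matrix_inv h"
proof -
  define S :: "'n rmat2" where "S = Smat"
  define \<sigma> where "\<sigma> = S ** \<gamma>"
  have gJg: "transpose \<gamma> ** Jmat ** \<gamma> = Jmat" using gSp by (simp add: Sp_def)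
  have tg: "tauM \<gamma> ** \<gamma> = mat 1" using gt matrix_left_right_inverse by blast
  have SS': "S ** S = mat 1" by (simp add: S_def SS)
  have \<sigma>\<sigma>: "\<sigma> ** \<sigma> = mat 1"
    using tg by (simp add: \<sigma>_def tau_S S_def matrix_mul_assoc)
  have \<sigma>J: "transpose \<sigma> ** Jmat ** \<sigma> = - Jmat"
  proof -
    have "transpose \<sigma> ** Jmat ** \<sigma> = transpose \<gamma> ** (transpose S ** Jmat ** S) ** \<gamma>"
      by (simp add: \<sigma>_def matrix_transpose_mul matrix_mul_assoc)
    also have "\<dots> = - (transpose \<gamma> ** Jmat ** \<gamma>)"
      by (simp add: S_def SJS mm_neg_l mm_neg_r)
    finally show ?thesis using gJg by simp
  qed
  have m\<sigma>\<sigma>: "(- \<sigma>) ** (- \<sigma>) = mat 1" using \<sigma>\<sigma> by (simp add: mm_neg_l mm_neg_r)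
  have m\<sigma>J: "transpose (- \<sigma>) ** Jmat ** (- \<sigma>) = - Jmat" using \<sigma>J by (simp add: mm_neg_l mm_neg_r tr_neg)
  have mSS: "(- S) ** (- S) = mat 1" using SS' by (simp add: mm_neg_l mm_neg_r)
  have SJ': "transpose S ** Jmat ** S = - Jmat" by (simp add: S_def SJS)
  have mSJ: "transpose (- S) ** Jmat ** (- S) = - Jmat" using SJ' by (simp add: mm_neg_l mm_neg_r tr_neg)
  define E1 where "E1 = {x. S *v x = x}"
  define E2 where "E2 = {x. (- S) *v x = x}"
  define L1 where "L1 = {x. \<sigma> *v x = x}"
  define L2 where "L2 = {x. (- \<sigma>) *v x = x}"
  have sub: "subspace {x. A *v x = x}" for A :: "'n rmat2"
    unfolding subspace_def by (auto simp: matrix_vector_right_distrib matrix_vector_mult_scaleR)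
  have dE1: "dim E1 = CARD('n)" unfolding E1_def by (rule asi_dim[OF SS' SJ'])
  have dE2: "dim E2 = CARD('n)" unfolding E2_def by (rule asi_dim[OF mSS mSJ])
  have dL1: "dim L1 = CARD('n)" unfolding L1_def by (rule asi_dim[OF \<sigma>\<sigma> \<sigma>J])
  have dL2: "dim L2 = CARD('n)" unfolding L2_def by (rule asi_dim[OF m\<sigma>\<sigma> m\<sigma>J])
  have sE1: "subspace E1" unfolding E1_def by (rule sub)
  have sE2: "subspace E2" unfolding E2_def by (rule sub)
  have sL1: "subspace L1" unfolding L1_def by (rule sub)
  have sL2: "subspace L2" unfolding L2_def by (rule sub)
  have d1: "dim E1 = dim L1" using dE1 dL1 by simp
  have d2: "dim E2 = dim L2" using dE2 dL2 by simp
  obtain f1 where f1: "linear f1" "f1 ` E1 = L1" "inj_on f1 E1"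
    using subspace_isomorphism[OF sE1 sL1 d1] by blast
  obtain f2 where f2: "linear f2" "f2 ` E2 = L2" "inj_on f2 E2"
    using subspace_isomorphism[OF sE2 sL2 d2] by blast
  define p1 where "p1 = (\<lambda>x. ((1/2::real) *\<^sub>R (mat 1 + S)) *v x)"
  define p2 where "p2 = (\<lambda>x. ((1/2::real) *\<^sub>R (mat 1 - S)) *v x)"
  have lp1: "linear p1" unfolding p1_def by simp
  have lp2: "linear p2" unfolding p2_def by simp
  have p1e: "p1 x = (1/2::real) *\<^sub>R (x + S *v x)" for x
    unfolding p1_def by (simp add: smv matrix_vector_mult_add_rdistrib)
  have p2e: "p2 x = (1/2::real) *\<^sub>R (x - S *v x)" for x
    unfolding p2_def by (simp add: smv matrix_vector_mult_diff_rdistrib)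
  define g where "g = (\<lambda>x. f1 (p1 x) + f2 (p2 x))"
  have SSx: "S *v (S *v x) = x" for x by (simp add: matrix_vector_mul_assoc SS')
  have p1E: "p1 x \<in> E1" for x
    by (simp add: E1_def p1e matrix_vector_mult_scaleR matrix_vector_right_distrib SSx add.commute)
  have p2E: "p2 x \<in> E2" for x
    by (simp add: E2_def p2e mv_neg_l matrix_vector_mult_scaleR matrix_vector_mult_diff_distrib SSx algebra_simps)
  have lg: "linear g" unfolding g_def
    using linear_compose[OF lp1 f1(1)] linear_compose[OF lp2 f2(1)]
    by (simp add: linear_compose_add comp_def)
  have inL1: "\<sigma> *v f1 (p1 x) = f1 (p1 x)" for x
    using f1(2) p1E[of x] unfolding L1_def by blast
  have inL2: "\<sigma> *v f2 (p2 x) = - f2 (p2 x)" for x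
  proof -
    have "f2 (p2 x) \<in> L2" using f2(2) p2E[of x] by blast
    hence "- (\<sigma> *v f2 (p2 x)) = f2 (p2 x)" unfolding L2_def by (simp add: mv_neg_l)
    thus ?thesis by (metis minus_minus)
  qed
  have p1S: "p1 (S *v x) = p1 x" for x by (simp add: p1e SSx add.commute)
  have p2S: "p2 (S *v x) = - p2 x" for x by (simp add: p2e SSx algebra_simps)
  have gS: "g (S *v x) = \<sigma> *v g x" for x
    by (simp add: g_def p1S p2S linear_neg[OF f2(1)] matrix_vector_right_distrib inL1 inL2)
  have ginj: "inj g"
  proof -
    { fix x assume gx: "g x = 0"
      let ?w = "f1 (p1 x)"
      have w2: "?w = - f2 (p2 x)" using gx by (simp add: g_def eq_neg_iff_add_eq_0)
      have "\<sigma> *v ?w = ?w" by (rule inL1)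
      moreover have "\<sigma> *v ?w = - ?w" using inL2[of x] w2 by (simp add: mv_neg_r)
      ultimately have "?w = - ?w" by simp
      hence w0: "?w = 0" by (simp add: vec_eq_iff)
      hence "f2 (p2 x) = 0" using w2 by simp
      have "p1 x = 0"
        using f1(3) p1E[of x] w0 linear_0[OF f1(1)] unfolding E1_def inj_on_def
        by (metis (mono_tags) mem_Collect_eq matrix_vector_mult_0_right)
      moreover have "p2 x = 0"
        using f2(3) p2E[of x] \<open>f2 (p2 x) = 0\<close> linear_0[OF f2(1)] unfolding E2_def inj_on_def
        by (metis (mono_tags) mem_Collect_eq matrix_vector_mult_0_right)
      moreover have "x = p1 x + p2 x" by (simp add: p1e p2e vec_eq_iff field_simps)
      ultimately have "x = 0" by simp }
    thus ?thesis using linear_injective_0[OF lg] by blast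
  qed
  define h1 where "h1 = matrix g"
  have h1g: "h1 *v x = g x" for x
    unfolding h1_def using matrix_works lg linear_matrix_vector_mul_eq by blast
  have h1S: "h1 ** S = \<sigma> ** h1"
    unfolding matrix_eq by (simp add: matrix_vector_mul_assoc[symmetric] h1g gS)
  have h1inv: "invertible h1"
  proof -
    obtain g' where "linear g'" "\<forall>x. g' (g x) = x" "\<forall>x. g (g' x) = x"
      using linear_injective_isomorphism[OF lg ginj] by auto
    thus ?thesis unfolding h1_def using matrix_invertible[OF lg] by (auto simp: fun_eq_iff)
  qed
  define M where "M = transpose h1 ** Jmat ** h1"
  have SMS: "S ** M ** S = - M"
  proof -
    have "S ** M ** S = transpose (h1 ** S) ** Jmat ** (h1 ** S)"
      by (simp add: M_def matrix_transpose_mul S_def trS matrix_mul_assoc)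
    also have "\<dots> = transpose h1 ** (transpose \<sigma> ** Jmat ** \<sigma>) ** h1"
      by (simp add: h1S matrix_transpose_mul matrix_mul_assoc)
    also have "\<dots> = - M" by (simp add: \<sigma>J M_def mm_neg_l mm_neg_r)
    finally show ?thesis .
  qed
  have trM: "transpose M = - M"
    by (simp add: M_def matrix_transpose_mul trJ mm_neg_l mm_neg_r matrix_mul_assoc)
  have Minv: "invertible M"
    unfolding M_def by (intro invertible_mult transpose_invertible h1inv J_invertible)
  define K where "K = b12 M"
  have Mb: "M = bmk 0 K (- transpose K) 0"
  proof -
    have e: "M = bmk (b11 M) (b12 M) (b21 M) (b22 M)" by (rule bmk_eta[symmetric])
    have "S ** bmk (b11 M) (b12 M) (b21 M) (b22 M) ** S = bmk (b11 M) (- b12 M) (- b21 M) (b22 M)"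
      by (simp add: S_def Smat_def bmk_mult mm_neg_l mm_neg_r)
    hence "bmk (b11 M) (- b12 M) (- b21 M) (b22 M) = bmk (- b11 M) (- b12 M) (- b21 M) (- b22 M)"
      using SMS e by (metis bmk_neg)
    hence "b11 M = - b11 M" "b22 M = - b22 M" by (simp_all only: bmk_eq_iff)
    hence z: "b11 M = 0" "b22 M = 0" by (auto simp: vec_eq_iff)
    have "bmk (transpose (b11 M)) (transpose (b21 M)) (transpose (b12 M)) (transpose (b22 M))
          = bmk (- b11 M) (- b12 M) (- b21 M) (- b22 M)"
      using trM e by (metis bmk_neg bmk_transpose)
    hence "transpose (b12 M) = - b21 M" by (simp add: bmk_eq_iff)
    hence "b21 M = - transpose K" unfolding K_def by simp
    with z e show ?thesis unfolding K_def by simp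
  qed
  have Kinv: "invertible K"
  proof -
    let ?N = "matrix_inv M"
    have "M ** ?N = mat 1" using minv_props(1)[OF Minv] .
    hence "bmk 0 K (- transpose K) 0 ** bmk (b11 ?N) (b12 ?N) (b21 ?N) (b22 ?N) = bmk (mat 1) 0 0 (mat 1)"
      using Mb bmk_eta bmk_mat by metis
    hence "K ** b21 ?N = mat 1" by (simp add: bmk_mult bmk_eq_iff)
    thus ?thesis using invertible_right_inverse by blast
  qed
  define Ki where "Ki = matrix_inv K"
  have KKi: "K ** Ki = mat 1" unfolding Ki_def using minv_props(1)[OF Kinv] .
  define g0 :: "'n rmat2" where "g0 = bmk (mat 1) 0 0 Ki"
  define h where "h = h1 ** g0"
  have hSp: "h \<in> Sp"
  proof -
    have "transpose h ** Jmat ** h = transpose g0 ** M ** g0"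
      by (simp add: h_def M_def matrix_transpose_mul matrix_mul_assoc)
    also have "\<dots> = bmk 0 (K ** Ki) (- (transpose Ki ** transpose K)) 0"
      by (simp add: g0_def Mb bmk_transpose bmk_mult mm_neg_l mm_neg_r)
    also have "\<dots> = Jmat"
      by (simp add: KKi Jmat_bmk flip: matrix_transpose_mul)
    finally show ?thesis by (simp add: Sp_def)
  qed
  have g0S: "g0 ** S = S ** g0"
    by (simp add: g0_def S_def Smat_def bmk_mult mm_neg_l mm_neg_r)
  have hS: "h ** S = \<sigma> ** h"
    by (metis h_def g0S h1S matrix_mul_assoc)
  have tauh: "tauM h = \<gamma> ** h"
  proof -
    have "tauM h = S ** (h ** S)" by (simp add: tau_S S_def matrix_mul_assoc)
    also have "\<dots> = \<gamma> ** h" by (simp add: hS \<sigma>_def matrix_mul_assoc SS')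
    finally show ?thesis .
  qed
  have "tauM h ** matrix_inv h = \<gamma>"
    using minv_props(1)[OF Sp_invertible[OF hSp]] by (simp add: tauh flip: matrix_mul_assoc)
  thus ?thesis using hSp by metis
qed


definition cnjM :: "complex^'m^'n \<Rightarrow> complex^'m^'n" where "cnjM X = (\<chi> i j. cnj (X$i$j))"
definition hf :: "complex^'n \<Rightarrow> complex^'n \<Rightarrow> complex" where "hf x y = (\<Sum>i\<in>UNIV. cnj (x$i) * y$i)"
definition cv :: "real^'n \<Rightarrow> complex^'n" where "cv x = (\<chi> i. complex_of_real (x$i))"

lemma cmat_mult: "cmat (A ** B) = cmat A ** cmat B"
  by (simp add: vec_eq_iff cmat_def matrix_matrix_mult_def)
lemma cmat_bmk: "cmat (bmk A B C D) = bmk (cmat A) (cmat B) (cmat C) (cmat D)"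
  by (simp add: vec_eq_iff cmat_def bmk_def split: sum.split)
lemma cmat_transpose: "cmat (transpose A) = transpose (cmat A)"
  by (simp add: vec_eq_iff cmat_def transpose_def)
lemma cmat_neg: "cmat (- A) = - cmat A"
  by (simp add: vec_eq_iff cmat_def)
lemma cmat_zero[simp]: "cmat 0 = 0"
  by (simp add: vec_eq_iff cmat_def)
lemma cmat_mat: "cmat (mat c) = mat (complex_of_real c)"
  by (simp add: vec_eq_iff cmat_def mat_def)
lemma cmat_blocks: "cmat g = bmk (cmat (blkA g)) (cmat (blkB g)) (cmat (blkC g)) (cmat (blkD g))"
  by (simp add: blk_eq bmk_eta flip: cmat_bmk)

lemma cnjM_mult: "cnjM (A ** B) = cnjM A ** cnjM B"
  by (simp add: vec_eq_iff cnjM_def matrix_matrix_mult_def)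
lemma cnjM_cmat[simp]: "cnjM (cmat A) = cmat A"
  by (simp add: vec_eq_iff cnjM_def cmat_def)
lemma cnjM_stk: "cnjM (stk T U) = stk (cnjM T) (cnjM U)"
  by (simp add: vec_eq_iff cnjM_def stk_def split: sum.split)
lemma cnjM_mat: "cnjM (mat c) = mat (cnj c)"
  by (simp add: vec_eq_iff cnjM_def mat_def)
lemma cnjM_neg: "cnjM (- A) = - cnjM A"
  by (simp add: vec_eq_iff cnjM_def)
lemma cnjM_add: "cnjM (A + B) = cnjM A + cnjM B"
  by (simp add: vec_eq_iff cnjM_def)
lemma cnjM_topb: "cnjM (topb X) = topb (cnjM X)"
  by (simp add: vec_eq_iff cnjM_def topb_def)
lemma cnjM_botb: "cnjM (botb X) = botb (cnjM X)"
  by (simp add: vec_eq_iff cnjM_def botb_def)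

lemma act_stk: "act g Z = topb (cmat g ** stk Z (mat 1)) ** matrix_inv (botb (cmat g ** stk Z (mat 1)))"
  unfolding act_def cmat_blocks[of g] by (simp add: bmk_stk)

lemma tauZ_eq: "tauZ Z = - cnjM Z"
  by (simp add: vec_eq_iff tauZ_def cnjM_def)

lemma hf_adj: "hf y ((transpose (cnjM A) ** B) *v y) = hf (A *v y) (B *v y)"
proof -
  have "hf y ((transpose (cnjM A) ** B) *v y) = (\<Sum>i\<in>UNIV. \<Sum>j\<in>UNIV. \<Sum>k\<in>UNIV. cnj (y$i) * (cnj (A$k$i) * (B$k$j * y$j)))"
    by (simp add: hf_def matrix_vector_mult_def matrix_matrix_mult_def transpose_def cnjM_def
                  sum_distrib_left sum_distrib_right mult.assoc)
  also have "\<dots> = (\<Sum>i\<in>UNIV. \<Sum>k\<in>UNIV. \<Sum>j\<in>UNIV. cnj (y$i) * (cnj (A$k$i) * (B$k$j * y$j)))"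
    by (rule sum.cong[OF refl], rule sum.swap)
  also have "\<dots> = (\<Sum>k\<in>UNIV. \<Sum>i\<in>UNIV. \<Sum>j\<in>UNIV. cnj (y$i) * (cnj (A$k$i) * (B$k$j * y$j)))"
    by (rule sum.swap)
  also have "\<dots> = hf (A *v y) (B *v y)"
    by (simp add: hf_def matrix_vector_mult_def sum_distrib_left sum_distrib_right mult_ac)
  finally show ?thesis .
qed

lemma hf_cnj: "hf v u = cnj (hf u v)"
  by (simp add: hf_def cnj_sum mult.commute)
lemma hf_diff: "hf y (u - v) = hf y u - hf y v"
  by (simp add: hf_def right_diff_distrib sum_subtractf)
lemma ifm: "(if P then c else 0) * (x::'a::semiring_0) = (if P then c * x else 0)" by simp
lemma mat_mv: "mat c *v (y::'a::comm_ring_1^'n) = (\<chi> i. c * y$i)"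
  by (simp add: vec_eq_iff matrix_vector_mult_def mat_def ifm)
lemma hf_mat: "hf y (mat c *v y) = c * hf y y"
  by (simp add: hf_def mat_mv sum_distrib_left mult_ac)
lemma hf_self: "hf y y = complex_of_real (\<Sum>i\<in>UNIV. (cmod (y$i))^2)"
  unfolding hf_def of_real_sum by (rule sum.cong[OF refl]) (simp add: complex_norm_square mult.commute del: of_real_power)
lemma hf_self_pos: "y \<noteq> 0 \<Longrightarrow> (\<Sum>i\<in>UNIV. (cmod (y$i))^2) > 0"
proof -
  assume "y \<noteq> 0"
  then obtain k where "y$k \<noteq> 0" by (auto simp: vec_eq_iff)
  hence "(cmod (y$k))^2 > 0" by simp
  moreover have "(cmod (y$k))^2 \<le> (\<Sum>i\<in>UNIV. (cmod (y$i))^2)"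
    by (rule member_le_sum) auto
  ultimately show ?thesis by linarith
qed

lemma inv_transpose_gen:
  fixes A :: "'a::comm_semiring_1^'n^'n"
  assumes "invertible A" shows "invertible (transpose A)"
proof -
  obtain A' where "A ** A' = mat 1" "A' ** A = mat 1" using assms unfolding invertible_def by blast
  hence "transpose A ** transpose A' = mat 1" "transpose A' ** transpose A = mat 1"
    by (metis matrix_transpose_mul transpose_mat)+
  thus ?thesis unfolding invertible_def by blast
qed

lemma cancel_l:
  fixes A :: "'a::semiring_1^'n^'n"
  assumes "invertible A" "A ** X = A ** Y" shows "X = Y"
proof -
  have "matrix_inv A ** (A ** X) = matrix_inv A ** (A ** Y)" using assms(2) by simp
  thus ?thesis by (simp add: matrix_mul_assoc minv_props(2)[OF assms(1)])
qed
lemma cancel_r: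
  fixes A :: "'a::semiring_1^'n^'n"
  assumes "invertible A" "X ** A = Y ** A" shows "X = Y"
proof -
  have "(X ** A) ** matrix_inv A = (Y ** A) ** matrix_inv A" using assms(2) by simp
  thus ?thesis by (simp add: minv_props(1)[OF assms(1)] flip: matrix_mul_assoc)
qed


lemma lhs_rhs:
  fixes \<gamma> h :: "'n::finite rmat2"
  assumes hSp: "h \<in> Sp" and gh: "\<gamma> = tauM h ** matrix_inv h"
  shows "siegel_fix \<gamma> \<noteq> {}"
proof -
  have hinv: "invertible h" by (rule Sp_invertible[OF hSp])
  have \<gamma>h: "\<gamma> ** h = tauM h"
    using minv_props(2)[OF hinv] by (simp add: gh flip: matrix_mul_assoc)
  have hJh: "transpose h ** Jmat ** h = Jmat" using hSp by (simp add: Sp_def)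
  define W :: "complex^'n^('n+'n)" where "W = stk (mat \<i>) (mat 1)"
  define cJ :: "complex^('n+'n)^('n+'n)" where "cJ = cmat Jmat"
  have cJb: "cJ = bmk 0 (mat 1) (- mat 1) 0"
    by (simp add: cJ_def Jmat_bmk cmat_bmk cmat_neg cmat_mat)
  define V where "V = cmat h ** W"
  define P where "P = topb V"
  define Q where "Q = botb V"
  have VPQ: "V = stk P Q" by (simp add: P_def Q_def stk_eta)
  have cJstk: "cJ ** stk T U = stk U (- T)" for T U :: "complex^'n^'n"
    by (simp add: cJb bmk_stk mm_neg_l)
  have hJh': "transpose (cmat h) ** cJ ** cmat h = cJ"
    by (simp add: cJ_def hJh flip: cmat_transpose cmat_mult)
  have a1: "transpose V ** cJ ** V = transpose W ** cJ ** W"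
  proof -
    have "transpose V ** cJ ** V = transpose W ** (transpose (cmat h) ** cJ ** cmat h) ** W"
      by (simp add: V_def matrix_transpose_mul matrix_mul_assoc)
    thus ?thesis by (simp add: hJh')
  qed
  have a2: "transpose W ** cJ ** W = 0"
    by (simp add: W_def cJstk tr_stk mm_neg_r flip: matrix_mul_assoc)
  have a3: "transpose V ** cJ ** V = transpose P ** Q - transpose Q ** P"
    by (simp add: VPQ cJstk tr_stk mm_neg_r flip: matrix_mul_assoc)
  have PQsym: "transpose P ** Q = transpose Q ** P"
    using a1 a2 a3 by simp
  have cV: "cnjM V = cmat h ** cnjM W" by (simp add: V_def cnjM_mult)
  have b1: "transpose (cnjM V) ** cJ ** V = transpose (cnjM W) ** cJ ** W"
  proof -
    have "transpose (cnjM V) ** cJ ** V = transpose (cnjM W) ** (transpose (cmat h) ** cJ ** cmat h) ** W"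
      unfolding cV by (simp add: V_def matrix_transpose_mul matrix_mul_assoc)
    thus ?thesis by (simp add: hJh')
  qed
  have b2: "transpose (cnjM W) ** cJ ** W = mat (- 2 * \<i>)"
  proof -
    have "transpose (cnjM W) ** cJ ** W = mat (- \<i>) - mat \<i>"
      by (simp add: W_def cnjM_stk cnjM_mat cJstk tr_stk mm_neg_r flip: matrix_mul_assoc)
    also have "\<dots> = mat (- 2 * \<i>)" by (simp add: vec_eq_iff mat_def)
    finally show ?thesis .
  qed
  have b3: "transpose (cnjM V) ** cJ ** V = transpose (cnjM P) ** Q - transpose (cnjM Q) ** P"
    by (simp add: VPQ cnjM_stk cJstk tr_stk mm_neg_r flip: matrix_mul_assoc)
  have herm: "transpose (cnjM Q) ** P - transpose (cnjM P) ** Q = mat (2 * \<i>)"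
  proof -
    have "transpose (cnjM P) ** Q - transpose (cnjM Q) ** P = mat (- 2 * \<i>)" using b1 b2 b3 by simp
    hence "- (transpose (cnjM P) ** Q - transpose (cnjM Q) ** P) = - mat (- 2 * \<i>)" by simp
    thus ?thesis by (simp add: mat_neg[symmetric])
  qed
  have key: "hf (Q *v y) (P *v y) - cnj (hf (Q *v y) (P *v y)) = 2 * \<i> * hf y y" for y
  proof -
    have "hf y ((transpose (cnjM Q) ** P - transpose (cnjM P) ** Q) *v y)
          = hf (Q *v y) (P *v y) - hf (P *v y) (Q *v y)"
      by (simp add: matrix_vector_mult_diff_rdistrib hf_diff hf_adj)
    also have "hf (P *v y) (Q *v y) = cnj (hf (Q *v y) (P *v y))" by (rule hf_cnj)
    finally show ?thesis using herm by (simp add: hf_mat)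
  qed
  have Q0: "Q *v y = 0 \<Longrightarrow> y = 0" for y
  proof -
    assume "Q *v y = 0"
    hence "2 * \<i> * hf y y = 0" using key[of y] by (simp add: hf_def)
    hence "hf y y = 0" by simp
    hence "complex_of_real (\<Sum>i\<in>UNIV. (cmod (y$i))^2) = 0" by (simp only: hf_self)
    hence "(\<Sum>i\<in>UNIV. (cmod (y$i))^2) = 0" by (simp only: of_real_eq_0_iff)
    thus "y = 0" using hf_self_pos by fastforce
  qed
  have Qinv: "invertible Q"
  proof -
    have "inj ((*v) Q)"
    proof (rule injI)
      fix x y assume "Q *v x = Q *v y"
      hence "Q *v (x - y) = 0" by (simp add: matrix_vector_mult_diff_distrib)
      thus "x = y" using Q0 by fastforce
    qed
    moreover have "surj ((*v) Q)"
      by (rule vec.linear_inj_imp_surj[OF matrix_vector_mul_linear_gen calculation])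
    ultimately show ?thesis by (simp add: invertible_eq_bij bij_def)
  qed
  define Qi where "Qi = matrix_inv Q"
  have QQi: "Q ** Qi = mat 1" and QiQ: "Qi ** Q = mat 1"
    using minv_props[OF Qinv] by (simp_all add: Qi_def)
  define Z where "Z = P ** Qi"
  have ZQ: "Z ** Q = P" by (simp add: Z_def QiQ flip: matrix_mul_assoc)
  have Zsym: "transpose Z = Z"
  proof -
    have "transpose Q ** (transpose Z ** Q) = transpose Q ** (Z ** Q)"
    proof -
      have "transpose Q ** (transpose Z ** Q) = transpose (Qi ** Q) ** transpose P ** Q"
        by (simp add: Z_def matrix_transpose_mul matrix_mul_assoc)
      also have "\<dots> = transpose Q ** P" by (simp add: QiQ PQsym)
      also have "\<dots> = transpose Q ** (Z ** Q)" by (simp add: ZQ)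
      finally show ?thesis .
    qed
    hence "transpose Z ** Q = Z ** Q" by (rule cancel_l[OF inv_transpose_gen[OF Qinv]])
    thus ?thesis by (rule cancel_r[OF Qinv])
  qed
  have Zpos: "pos_def (ImM Z)"
    unfolding pos_def_def
  proof (intro allI impI)
    fix x :: "real^'n" assume x0: "x \<noteq> 0"
    have e1: "x \<bullet> (ImM Z *v x) = Im (hf (cv x) (Z *v cv x))"
      by (simp add: inner_vec_def matrix_vector_mult_def ImM_def cv_def hf_def sum_distrib_left mult_ac)
    define y where "y = Qi *v cv x"
    have Qy: "Q *v y = cv x" by (simp add: y_def matrix_vector_mul_assoc QQi)
    have y0: "y \<noteq> 0"
    proof
      assume "y = 0"
      hence "cv x = 0" using Qy by simp
      hence "x = 0" by (simp add: cv_def vec_eq_iff)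
      thus False using x0 by simp
    qed
    have Zx: "Z *v cv x = P *v y" by (simp add: Qy[symmetric] matrix_vector_mul_assoc ZQ)
    define a where "a = hf (Q *v y) (P *v y)"
    have "a - cnj a = 2 * \<i> * hf y y" unfolding a_def by (rule key)
    moreover have "a - cnj a = complex_of_real (2 * Im a) * \<i>" by (rule complex_diff_cnj)
    ultimately have "complex_of_real (Im a) = complex_of_real (\<Sum>i\<in>UNIV. (cmod (y$i))^2)"
      by (simp add: hf_self)
    hence "Im a = (\<Sum>i\<in>UNIV. (cmod (y$i))^2)" by (simp only: of_real_eq_iff)
    hence "Im a > 0" using hf_self_pos[OF y0] by simp
    thus "x \<bullet> (ImM Z *v x) > 0" using e1 Zx Qy by (simp add: a_def)
  qed
  define G where "G = cmat \<gamma> ** stk Z (mat 1)"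
  define M1 where "M1 = topb G"
  define N where "N = botb G"
  have actZ: "act \<gamma> Z = M1 ** matrix_inv N" by (simp add: act_stk M1_def N_def G_def)
  have VZ: "V = stk Z (mat 1) ** Q" by (simp add: VPQ stk_mult ZQ)
  have GQ: "cmat \<gamma> ** V = stk (M1 ** Q) (N ** Q)"
    by (simp add: VZ matrix_mul_assoc flip: G_def) (simp add: M1_def N_def stk_mult[symmetric] stk_eta)
  have hb: "cmat h = bmk (cmat (b11 h)) (cmat (b12 h)) (cmat (b21 h)) (cmat (b22 h))"
    by (simp add: bmk_eta flip: cmat_bmk)
  have Pe: "P = cmat (b11 h) ** mat \<i> + cmat (b12 h)" and Qe: "Q = cmat (b21 h) ** mat \<i> + cmat (b22 h)"
    by (simp_all add: P_def Q_def V_def W_def hb bmk_stk)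
  have "cmat \<gamma> ** V = cmat (tauM h) ** W"
    by (simp add: V_def matrix_mul_assoc \<gamma>h flip: cmat_mult)
  also have "\<dots> = stk (- cnjM P) (cnjM Q)"
    by (simp add: tauM_bmk cmat_bmk cmat_neg W_def bmk_stk Pe Qe cnjM_add cnjM_mult cnjM_mat
                  mat_neg mm_neg_l mm_neg_r)
  finally have "stk (M1 ** Q) (N ** Q) = stk (- cnjM P) (cnjM Q)" using GQ by simp
  hence M1Q: "M1 ** Q = - cnjM P" and NQ: "N ** Q = cnjM Q" by (simp_all add: stk_eq_iff)
  have cQinv: "invertible (cnjM Q)"
  proof -
    have "cnjM Q ** cnjM Qi = mat 1" by (simp add: QQi cnjM_mat flip: cnjM_mult)
    thus ?thesis using invertible_right_inverse by blast
  qed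
  have Qiinv: "invertible Qi" using QQi QiQ unfolding invertible_def by blast
  have NcQ: "N = cnjM Q ** Qi" by (simp add: NQ[symmetric] QQi flip: matrix_mul_assoc)
  have Ninv: "invertible N" unfolding NcQ by (rule invertible_mult[OF cQinv Qiinv])
  have "act \<gamma> Z ** cnjM Q = - cnjM P"
  proof -
    have "act \<gamma> Z ** cnjM Q = M1 ** (matrix_inv N ** N) ** Q"
      by (simp add: actZ NQ[symmetric] matrix_mul_assoc)
    thus ?thesis by (simp add: minv_props(2)[OF Ninv] M1Q)
  qed
  moreover have "tauZ Z ** cnjM Q = - cnjM P"
    by (simp add: tauZ_eq mm_neg_l ZQ flip: cnjM_mult)
  ultimately have "act \<gamma> Z = tauZ Z" using cancel_r[OF cQinv] by metis
  hence "Z \<in> siegel_fix \<gamma>" using Zsym Zpos by (simp add: siegel_fix_def siegel_def)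
  thus ?thesis by blast
qed

theorem lemma3p5:
  fixes \<gamma> :: "'n::finite rmat2"
  assumes "\<gamma> \<in> Sp"
    and "\<gamma> ** tauM \<gamma> = mat 1"
  shows "(\<exists>h \<in> Sp. \<gamma> = tauM h ** matrix_inv h) \<longleftrightarrow> siegel_fix \<gamma> \<noteq> {}"
proof -
  have ex: "\<exists>h \<in> Sp. \<gamma> = tauM h ** matrix_inv h" by (rule exists_h[OF assms])
  then obtain h where "h \<in> Sp" "\<gamma> = tauM h ** matrix_inv h" by blast
  hence "siegel_fix \<gamma> \<noteq> {}" by (rule lhs_rhs)
  thus ?thesis using ex by blast
qed

end
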